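(* Let $c, k$ be natural numbers such that $c$ is not a perfect square and $k$ is even. Then there exists a normal set $A_{c,k} \subseteq \mathbb{N}$ such that for all $x,y \in A_{c,k}$ and every natural number $n$ we have $xy \neq c n^k$.
   Context: $\mathbb{N} = \{1,2,3,\dots\}$. An infinite binary sequence $(\lambda_i)_{i \ge 1}$ is called normal if every finite binary word $\omega$ of length $|\omega|$ occurs in the sequence with asymptotic frequency $2^{-|\omega|}$, i.e. the number of $i \le N$ with $(\lambda_i,\dots,\lambda_{i+|\omega|-1}) = \omega$, divided by $N$, tends to $2^{-|\omega|}$ as $N \to \infty$. A set $B \subseteq \mathbb{N}$ is called normal if its indicator sequence ($\lambda_i = 1$ iff $i \in B$) is normal. *)

theory Defs
  imports Complex_Main
begin

text \<open>A binary sequence indexed by positive integers (values at 0 are ignored):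
  every finite word w occurs, starting at positions i \<in> {1..N}, with asymptotic
  frequency 2^(-|w|).\<close>
definition normal_seq :: "(nat \<Rightarrow> bool) \<Rightarrow> bool" where
  "normal_seq lam \<longleftrightarrow>
     (\<forall>w :: bool list.
        (\<lambda>N. real (card {i \<in> {1..N}. \<forall>j < length w. lam (i + j) = w ! j}) / real N)
          \<longlonglongrightarrow> (1 / 2) ^ length w)"

definition normal_set :: "nat set \<Rightarrow> bool" where
  "normal_set B \<longleftrightarrow> normal_seq (\<lambda>i. i \<in> B)"

end

theory Submission
  imports Defs "HOL-Computational_Algebra.Squarefree" "HOL-Probability.Probability" "HOL-Real_Asymp.Real_Asymp"
begin

definition issq :: "nat \<Rightarrow> bool" where "issq x \<longleftrightarrow> (\<exists>m. x = m^2)"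

lemma issq_mult: "issq a \<Longrightarrow> issq b \<Longrightarrow> issq (a*b)"
  unfolding issq_def by (metis power_mult_distrib)

lemma issq_cancel: assumes "b > 0" "issq (a * b^2)" shows "issq a"
proof -
  obtain m where m: "a * b^2 = m^2" using assms unfolding issq_def by auto
  have "b^2 dvd m^2" by (metis m dvd_triv_right)
  hence "b dvd m" by simp
  then obtain q where q: "m = b * q" by auto
  have "a * b^2 = q^2 * b^2" using m q by (metis power_mult_distrib mult.commute)
  moreover have "b^2 \<noteq> 0" using assms(1) by simp
  ultimately have "a = q^2" by (metis mult_right_cancel)
  thus ?thesis unfolding issq_def by auto
qed

lemma sqf_dvd_sq: fixes t m :: nat assumes "squarefree t" "t dvd m^2" shows "t dvd m"
proof (cases "m = 0")
  case True thus ?thesis by simp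
next
  case False
  have t0: "t \<noteq> 0" using assms(1) by (metis not_squarefree_0)
  show ?thesis
  proof (rule multiplicity_le_imp_dvd[OF t0])
    fix p :: nat assume p: "prime p"
    have "multiplicity p t \<le> 1" using assms(1) p squarefree_factorial_semiring'' t0 by blast
    moreover have "multiplicity p t \<le> multiplicity p (m^2)"
      using assms(2) False by (intro dvd_imp_multiplicity_le) auto
    moreover have "multiplicity p (m^2) = 2 * multiplicity p m"
      using p False by (simp add: prime_elem_multiplicity_power_distrib)
    ultimately show "multiplicity p t \<le> multiplicity p m" by linarith
  qed
qed

lemma sqf_prod_sq_eq: fixes a b :: nat
  assumes "squarefree a" "squarefree b" "issq (a*b)" shows "a = b"
proof -
  obtain m where m: "a*b = m^2" using assms(3) unfolding issq_def by auto
  have "a dvd m" using sqf_dvd_sq[OF assms(1)] m by (metis dvd_triv_left)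
  then obtain q where q: "m = a*q" by auto
  have a0: "a > 0" using assms(1) by (metis not_squarefree_0 gr0I)
  have "a * b = a * (a * q^2)" using m q by (simp add: power2_eq_square algebra_simps)
  hence b: "b = a * q^2" using a0 by (metis mult_left_cancel neq0_conv)
  hence "q^2 dvd b" by simp
  hence "q dvd 1" using assms(2) squarefreeD by blast
  hence "q = 1" by simp
  thus ?thesis using b by simp
qed

lemma sqfpart_eq: fixes x y :: nat assumes "x > 0" "y > 0" "issq (x*y)"
  shows "squarefree_part x = squarefree_part y"
proof -
  define a where "a = squarefree_part x"
  define b where "b = squarefree_part y"
  define u where "u = square_part x"
  define v where "v = square_part y"
  have x: "x = a * u^2" unfolding a_def u_def by (rule squarefree_decompose)
  have y: "y = b * v^2" unfolding b_def v_def by (rule squarefree_decompose)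
  have "u > 0" "v > 0" using assms x y by (auto intro: Nat.gr0I)
  hence uv: "u * v > 0" by simp
  have "x*y = (a*b) * (u * v)^2" using x y by (simp add: power_mult_distrib algebra_simps)
  hence "issq ((a*b) * (u * v)^2)" using assms(3) by simp
  hence "issq (a*b)" using issq_cancel uv by blast
  thus ?thesis using sqf_prod_sq_eq unfolding a_def b_def by auto
qed

definition rel :: "nat \<Rightarrow> nat \<Rightarrow> nat \<Rightarrow> bool" where
  "rel c x y \<longleftrightarrow> 0 < x \<and> 0 < y \<and> (issq (x*y) \<or> issq (x*y*c))"

lemma rel_refl: "x > 0 \<Longrightarrow> rel c x x"
  unfolding rel_def issq_def by (auto simp: power2_eq_square)

lemma rel_sym: "rel c x y \<Longrightarrow> rel c y x"
  unfolding rel_def by (auto simp: mult.commute)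

lemma rel_trans: assumes "c > 0" "rel c x y" "rel c y z" shows "rel c x z"
proof -
  have y: "y > 0" and x: "x > 0" and z: "z > 0" using assms unfolding rel_def by auto
  have c: "c > 0" by fact
  { assume "issq (x*y)" "issq (y*z)"
    hence "issq ((x*z) * y^2)" using issq_mult by (metis mult.assoc mult.commute power2_eq_square)
    hence "issq (x*z)" using issq_cancel y by blast }
  moreover
  { assume "issq (x*y)" "issq (y*z*c)"
    hence "issq ((x*z*c) * y^2)" using issq_mult
      by (smt (verit, ccfv_threshold) mult.assoc mult.commute power2_eq_square)
    hence "issq (x*z*c)" using issq_cancel y by blast }
  moreover
  { assume "issq (x*y*c)" "issq (y*z)"
    hence "issq ((x*z*c) * y^2)" using issq_mult
      by (smt (verit, ccfv_threshold) mult.assoc mult.commute power2_eq_square)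
    hence "issq (x*z*c)" using issq_cancel y by blast }
  moreover
  { assume "issq (x*y*c)" "issq (y*z*c)"
    hence "issq ((x*z) * (y*c)^2)" using issq_mult
      by (smt (verit, ccfv_threshold) mult.assoc mult.commute power2_eq_square)
    hence "issq (x*z)" using issq_cancel y c by (metis nat_0_less_mult_iff) }
  ultimately show ?thesis using assms x z unfolding rel_def by blast
qed

definition rho :: "nat \<Rightarrow> nat \<Rightarrow> nat" where "rho c x = (LEAST y. rel c x y)"
definition sig :: "nat \<Rightarrow> nat \<Rightarrow> bool" where "sig c x = issq (x * rho c x)"

lemma rel_rho: "x > 0 \<Longrightarrow> rel c x (rho c x)"
  unfolding rho_def by (rule LeastI[of _ x]) (rule rel_refl)

lemma rho_eq: assumes "c > 0" "rel c x y" shows "rho c x = rho c y"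
proof -
  have "\<And>z. rel c x z \<longleftrightarrow> rel c y z" using assms rel_trans rel_sym by metis
  hence "rel c x = rel c y" by auto
  thus ?thesis unfolding rho_def by simp
qed

lemma rho_eq_rel: assumes "c > 0" "x > 0" "y > 0" "rho c x = rho c y" shows "rel c x y"
proof -
  have "rel c x (rho c x)" using rel_rho[OF assms(2)] .
  moreover have "rel c y (rho c y)" using rel_rho[OF assms(3)] .
  hence "rel c (rho c x) y" using assms(4) rel_sym by simp
  ultimately show ?thesis using rel_trans assms(1) by blast
qed

lemma notsq_not_both: assumes "\<not> issq c" "issq (x*y)" "issq (x*y*c)" "x > 0" "y > 0"
  shows False
proof -
  obtain m where m: "x*y = m^2" using assms unfolding issq_def by auto
  have "m > 0" using m assms by (auto intro: Nat.gr0I)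
  moreover have "issq (c * m^2)" using assms(3) m by (simp add: mult.commute)
  ultimately show False using issq_cancel assms(1) by blast
qed

lemma key_avoid:
  assumes c: "c > 0" "\<not> issq c" and k: "even k"
    and x: "x > 0" and y: "y > 0" and eq: "x * y = c * n^k"
  shows "sig c x \<noteq> sig c y"
proof
  assume s: "sig c x = sig c y"
  obtain h where h: "k = 2*h" using k by auto
  have "x*y*c = (c * n^h)^2" using eq h by (simp add: power_mult_distrib power_mult algebra_simps power2_eq_square)
  hence sq: "issq (x*y*c)" unfolding issq_def by blast
  hence r: "rel c x y" using x y unfolding rel_def by auto
  have rr: "rho c x = rho c y" using rho_eq[OF c(1) r] .
  define z where "z = rho c x"
  have z1: "rel c x z" using rel_rho[OF x] unfolding z_def .
  have z2: "rel c y z" using rel_rho[OF y] rr unfolding z_def by metis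
  note z = z1 z2
  hence z0: "z > 0" unfolding rel_def by auto
  have "issq (x*y)"
  proof (cases "sig c x")
    case True
    hence "issq (x*z)" "issq (y*z)" using s rr unfolding sig_def z_def by auto
    hence "issq ((x*y)*z^2)" using issq_mult by (metis mult.assoc mult.commute power2_eq_square)
    thus ?thesis using issq_cancel z0 by blast
  next
    case False
    hence "\<not> issq (x*z)" "\<not> issq (y*z)" using s rr unfolding sig_def z_def by auto
    hence "issq (x*z*c)" "issq (y*z*c)" using z unfolding rel_def by auto
    hence "issq ((x*y)*(z*c)^2)" using issq_mult
      by (smt (verit, ccfv_threshold) mult.assoc mult.commute power2_eq_square)
    thus ?thesis using issq_cancel z0 c by (metis nat_0_less_mult_iff)
  qed
  thus False using notsq_not_both[OF c(2) _ sq x y] by blast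
qed


lemma card_sq_le: fixes M :: nat shows "real (card {b::nat. b^2 \<le> M}) \<le> sqrt M + 1"
proof -
  define K where "K = nat \<lfloor>sqrt M\<rfloor>"
  have "{b::nat. b^2 \<le> M} \<subseteq> {0..K}"
  proof
    fix b :: nat assume "b \<in> {b. b^2 \<le> M}"
    hence "real b ^2 \<le> real M" by (metis mem_Collect_eq of_nat_le_iff of_nat_power)
    hence "real b \<le> sqrt M" by (simp add: real_le_rsqrt)
    hence "b \<le> K" unfolding K_def by (simp add: le_nat_floor)
    thus "b \<in> {0..K}" by simp
  qed
  hence "card {b::nat. b^2 \<le> M} \<le> card {0..K}" by (intro card_mono) auto
  hence "card {b::nat. b^2 \<le> M} \<le> K + 1" by simp
  moreover have "real K \<le> sqrt M" unfolding K_def by simp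
  ultimately show ?thesis by linarith
qed

lemma card_sqfpart_le: fixes M t :: nat shows "real (card {y \<in> {1..M}. squarefree_part y = t}) \<le> sqrt M + 1"
proof -
  have "{y \<in> {1..M}. squarefree_part y = t} \<subseteq> (\<lambda>b. t * b^2) ` {b::nat. b^2 \<le> M}"
  proof
    fix y assume y: "y \<in> {y \<in> {1..M}. squarefree_part y = t}"
    have "y = t * square_part y ^2" using y squarefree_decompose[of y] by simp
    moreover have "square_part y ^ 2 \<le> M"
    proof -
      have "square_part y ^ 2 \<le> y" using square_part_square_dvd[of y] y by (intro dvd_imp_le) auto
      thus ?thesis using y by simp
    qed
    ultimately show "y \<in> (\<lambda>b. t * b^2) ` {b::nat. b^2 \<le> M}" by blast
  qed
  moreover have "finite {b::nat. b^2 \<le> M}"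
  proof (rule finite_subset[of _ "{..M}"])
    show "{b::nat. b^2 \<le> M} \<subseteq> {..M}"
    proof
      fix b :: nat assume "b \<in> {b. b^2 \<le> M}"
      hence "b * b \<le> M" by (simp add: power2_eq_square)
      thus "b \<in> {..M}" using le_square[of b] by (metis atMost_iff order_trans)
    qed
  qed simp
  ultimately have "card {y \<in> {1..M}. squarefree_part y = t} \<le> card ((\<lambda>b. t * b^2) ` {b::nat. b^2 \<le> M})"
    by (intro card_mono finite_imageI)
  also have "\<dots> \<le> card {b::nat. b^2 \<le> M}" by (rule card_image_le) fact
  finally have "card {y \<in> {1..M}. squarefree_part y = t} \<le> card {b::nat. b^2 \<le> M}" .
  thus ?thesis using card_sq_le[of M] by linarith
qed

lemma rel_sqfpart: assumes "c > 0" "rel c x y"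
  shows "squarefree_part y = squarefree_part x \<or> squarefree_part y = squarefree_part (x*c)"
proof -
  have x: "x > 0" and y: "y > 0" using assms unfolding rel_def by auto
  show ?thesis
  proof (cases "issq (x*y)")
    case True thus ?thesis using sqfpart_eq[OF x y] by simp
  next
    case False
    hence "issq ((x*c)*y)" using assms unfolding rel_def by (simp add: ac_simps)
    thus ?thesis using sqfpart_eq[of "x*c" y] x y assms(1) by simp
  qed
qed

lemma card_rel_pairs: fixes M c :: nat assumes "c > 0"
  shows "real (card {(x,y). x \<in> {1..M} \<and> y \<in> {1..M} \<and> rel c x y}) \<le> 2 * M * (sqrt M + 1)"
proof -
  have eq: "{(x,y). x \<in> {1..M} \<and> y \<in> {1..M} \<and> rel c x y} = Sigma {1..M} (\<lambda>x. {y \<in> {1..M}. rel c x y})"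
    by auto
  have "card (Sigma {1..M} (\<lambda>x. {y \<in> {1..M}. rel c x y})) = (\<Sum>x\<in>{1..M}. card {y \<in> {1..M}. rel c x y})"
    by (rule card_SigmaI) auto
  also have "real \<dots> \<le> (\<Sum>x\<in>{1..M}. 2 * (sqrt M + 1))"
    unfolding of_nat_sum
  proof (rule sum_mono)
    fix x assume "x \<in> {1..M}"
    have "{y \<in> {1..M}. rel c x y} \<subseteq> {y \<in> {1..M}. squarefree_part y = squarefree_part x} \<union>
            {y \<in> {1..M}. squarefree_part y = squarefree_part (x*c)}"
      using rel_sqfpart[OF assms] by auto
    hence "card {y \<in> {1..M}. rel c x y} \<le> card ({y \<in> {1..M}. squarefree_part y = squarefree_part x} \<union>
            {y \<in> {1..M}. squarefree_part y = squarefree_part (x*c)})"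
      by (intro card_mono) auto
    also have "\<dots> \<le> card {y \<in> {1..M}. squarefree_part y = squarefree_part x} +
            card {y \<in> {1..M}. squarefree_part y = squarefree_part (x*c)}" by (rule card_Un_le)
    finally have "card {y \<in> {1..M}. rel c x y} \<le> card {y \<in> {1..M}. squarefree_part y = squarefree_part x} +
            card {y \<in> {1..M}. squarefree_part y = squarefree_part (x*c)}" .
    hence "real (card {y \<in> {1..M}. rel c x y}) \<le> real (card {y \<in> {1..M}. squarefree_part y = squarefree_part x}) +
            real (card {y \<in> {1..M}. squarefree_part y = squarefree_part (x*c)})" by (simp only: of_nat_add[symmetric] of_nat_le_iff)
    thus "real (card {y \<in> {1..M}. rel c x y}) \<le> 2 * (sqrt M + 1)"
      using card_sqfpart_le[of M "squarefree_part x"] card_sqfpart_le[of M "squarefree_part (x*c)"]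
      by (smt (verit))
  qed
  also have "\<dots> = 2 * M * (sqrt M + 1)" by simp
  finally show ?thesis unfolding eq .
qed

lemma rel_close_sqfpart: assumes c: "c > 0" and r: "rel c x y" and xy: "x < y"
  shows "squarefree_part x \<le> (y - x) * c"
proof -
  have x: "x > 0" and y: "y > 0" using r unfolding rel_def by auto
  define t where "t = squarefree_part x"
  define t' where "t' = squarefree_part y"
  define u where "u = square_part x"
  define v where "v = square_part y"
  have xd: "x = t * u^2" unfolding t_def u_def by (rule squarefree_decompose)
  have yd: "y = t' * v^2" unfolding t'_def v_def by (rule squarefree_decompose)
  have "u > 0" "v > 0" using x y xd yd by (auto intro: Nat.gr0I)
  hence uv: "u * v > 0" by simp
  obtain e where e: "e = 1 \<or> e = c" and sq: "issq (x*y*e)" using r unfolding rel_def by (metis mult_1_right)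
  have e0: "e > 0" "e \<le> c" using e c by auto
  have "x*y*e = (t*t'*e) * (u * v)^2" using xd yd by (simp add: power_mult_distrib algebra_simps)
  hence sq2: "issq (t*t'*e)" using sq issq_cancel uv by metis
  define g where "g = gcd t t'"
  have t0: "t > 0" unfolding t_def by (metis gr0I squarefree_part_nonzero)
  have g0: "g > 0" unfolding g_def using t0 by simp
  define a where "a = t div g"
  define b where "b = t' div g"
  have ta: "t = g * a" unfolding a_def g_def by simp
  have tb: "t' = g * b" unfolding b_def g_def by simp
  have cop: "coprime a b" unfolding a_def b_def g_def using t0 by (intro div_gcd_coprime) auto
  have "t*t'*e = (a*b*e) * g^2" using ta tb by (simp add: power2_eq_square algebra_simps)
  hence "issq (a*b*e)" using sq2 issq_cancel g0 by metis
  then obtain m where m: "a*b*e = m^2" unfolding issq_def by auto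
  have sqa: "squarefree a" using ta squarefree_mono[of a t] unfolding t_def by (metis dvd_triv_right squarefree_squarefree_part)
  have "a dvd m" using sqf_dvd_sq[OF sqa] m by (metis dvd_mult2 dvd_refl mult.assoc)
  then obtain m1 where m1: "m = a * m1" by auto
  have a0: "a > 0" using ta t0 by (auto intro: Nat.gr0I)
  have "a * (b*e) = a * (a * m1^2)" using m m1 by (simp add: power2_eq_square algebra_simps)
  hence "b*e = a*m1^2" using a0 by (metis mult_left_cancel neq0_conv)
  hence "a dvd b*e" by simp
  hence "a dvd e" using cop by (simp add: coprime_dvd_mult_right_iff)
  hence "a \<le> c" using e0 by (meson dvd_imp_le order_trans)
  moreover have "g dvd y - x"
  proof -
    have "g dvd x" using xd ta by simp
    moreover have "g dvd y" using yd tb by simp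
    ultimately show ?thesis by (simp add: dvd_diff_nat)
  qed
  hence "g \<le> y - x" using xy by (intro dvd_imp_le) auto
  ultimately have "g * a \<le> (y - x) * c" by (intro mult_mono) auto
  thus ?thesis using ta unfolding t_def by simp
qed

lemma card_close_rel: fixes M c L :: nat assumes c: "c > 0"
  shows "real (card {x \<in> {1..M}. \<exists>y. x < y \<and> y < x + L \<and> rel c x y}) \<le> real (L * c) * (sqrt M + 1)"
proof -
  have "{x \<in> {1..M}. \<exists>y. x < y \<and> y < x + L \<and> rel c x y} \<subseteq> (\<Union>t\<in>{1..L*c}. {y \<in> {1..M}. squarefree_part y = t})"
  proof
    fix x assume "x \<in> {x \<in> {1..M}. \<exists>y. x < y \<and> y < x + L \<and> rel c x y}"
    then obtain y where x: "x \<in> {1..M}" and y: "x < y" "y < x + L" "rel c x y" by auto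
    have "squarefree_part x \<le> (y - x) * c" using rel_close_sqfpart[OF c y(3) y(1)] .
    also have "\<dots> \<le> L * c" using y by (intro mult_right_mono) auto
    finally have "squarefree_part x \<le> L * c" .
    moreover have "squarefree_part x \<ge> 1" by (metis less_one not_le squarefree_part_nonzero)
    ultimately show "x \<in> (\<Union>t\<in>{1..L*c}. {y \<in> {1..M}. squarefree_part y = t})" using x by auto
  qed
  hence "card {x \<in> {1..M}. \<exists>y. x < y \<and> y < x + L \<and> rel c x y} \<le> card (\<Union>t\<in>{1..L*c}. {y \<in> {1..M}. squarefree_part y = t})"
    by (intro card_mono) auto
  also have "\<dots> \<le> (\<Sum>t\<in>{1..L*c}. card {y \<in> {1..M}. squarefree_part y = t})"
    by (rule card_UN_le) auto
  finally have "real (card {x \<in> {1..M}. \<exists>y. x < y \<and> y < x + L \<and> rel c x y}) \<le> (\<Sum>t\<in>{1..L*c}. real (card {y \<in> {1..M}. squarefree_part y = t}))"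
    by (simp only: of_nat_sum[symmetric] of_nat_le_iff)
  also have "\<dots> \<le> (\<Sum>t\<in>{1..L*c}. sqrt M + 1)" by (intro sum_mono card_sqfpart_le)
  also have "\<dots> = real (L*c) * (sqrt M + 1)" by simp
  finally show ?thesis .
qed


abbreviation Bc :: "bool measure" where "Bc \<equiv> measure_pmf (bernoulli_pmf (1/2))"

definition Om :: "(nat \<Rightarrow> bool) measure" where "Om = PiM UNIV (\<lambda>_. Bc)"

interpretation PP: product_prob_space "\<lambda>_::nat. Bc" UNIV
  by unfold_locales

interpretation OP: prob_space Om
  unfolding Om_def by (rule prob_space_PiM) (simp add: prob_space_measure_pmf)

lemma space_Om: "space Om = UNIV"
  unfolding Om_def space_PiM by auto

lemma sets_Om_cyl: assumes "finite T" shows "{\<omega> \<in> space Om. \<forall>t\<in>T. \<omega> (f t) = g t} \<in> sets Om"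
proof -
  have "Measurable.pred Om (\<lambda>\<omega>. \<forall>t\<in>T. \<omega> (f t) = g t)"
    using assms unfolding Om_def by measurable
  thus ?thesis by (rule predE)
qed

lemma cyl_prob: assumes "finite F"
  shows "measure Om {\<omega> \<in> space Om. \<forall>a\<in>F. \<omega> a = v a} = (1/2) ^ card F"
proof -
  have "emeasure Om {\<omega> \<in> space Om. \<forall>a\<in>F. \<omega> a \<in> {v a}} = (\<Prod>a\<in>F. emeasure Bc {v a})"
    unfolding Om_def by (rule PP.emeasure_PiM_Collect) (use assms in auto)
  also have "\<dots> = (\<Prod>a\<in>F. ennreal (1/2))"
  proof (intro prod.cong refl)
    fix a show "emeasure Bc {v a} = ennreal (1/2)"
      by (cases "v a") (simp_all add: emeasure_pmf_single pmf_bernoulli_False)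
  qed
  also have "\<dots> = ennreal ((1/2) ^ card F)" by (subst prod_ennreal) auto
  finally show ?thesis unfolding measure_def by simp
qed

lemma spec_prob: fixes f :: "'i \<Rightarrow> nat" assumes T: "finite T"
  shows "measure Om {\<omega>\<in>space Om. \<forall>t\<in>T. \<omega> (f t) = g t} =
    (if (\<forall>t\<in>T. \<forall>t'\<in>T. f t = f t' \<longrightarrow> g t = g t') then (1/2)^card (f`T) else 0)"
proof (cases "\<forall>t\<in>T. \<forall>t'\<in>T. f t = f t' \<longrightarrow> g t = g t'")
  case True
  define v where "v a = g (SOME t. t \<in> T \<and> f t = a)" for a
  have v: "v (f t) = g t" if "t \<in> T" for t
  proof -
    have "\<exists>t'. t' \<in> T \<and> f t' = f t" using that by blast
    hence "(SOME t'. t' \<in> T \<and> f t' = f t) \<in> T \<and> f (SOME t'. t' \<in> T \<and> f t' = f t) = f t" by (rule someI_ex)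
    hence "g (SOME t'. t' \<in> T \<and> f t' = f t) = g t" using True that by blast
    thus ?thesis unfolding v_def .
  qed
  have "{\<omega>\<in>space Om. \<forall>t\<in>T. \<omega> (f t) = g t} = {\<omega>\<in>space Om. \<forall>a\<in>f`T. \<omega> a = v a}"
    using v by auto
  hence "measure Om {\<omega>\<in>space Om. \<forall>t\<in>T. \<omega> (f t) = g t} = (1/2)^card (f`T)"
    using cyl_prob[of "f`T" v] T by simp
  thus ?thesis by (simp only: if_P[OF True])
next
  case False
  then obtain t t' where tt: "t \<in> T" "t' \<in> T" "f t = f t'" "g t \<noteq> g t'" by blast
  have "{\<omega>\<in>space Om. \<forall>t\<in>T. \<omega> (f t) = g t} = {}"
  proof (rule ccontr)
    assume "{\<omega>\<in>space Om. \<forall>t\<in>T. \<omega> (f t) = g t} \<noteq> {}"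
    then obtain \<omega> where om: "\<forall>t\<in>T. \<omega> (f t) = g t" by blast
    have "\<omega> (f t) = g t" using om tt(1) by (rule bspec)
    moreover have "\<omega> (f t') = g t'" using om tt(2) by (rule bspec)
    ultimately show False using tt(3,4) by metis
  qed
  thus ?thesis by (simp only: if_not_P[OF False] measure_empty)
qed

definition fr :: "nat \<Rightarrow> nat \<times> nat \<Rightarrow> nat" where "fr c p = rho c (fst p + snd p)"
definition gr :: "nat \<Rightarrow> bool list \<Rightarrow> nat \<times> nat \<Rightarrow> bool" where "gr c w p = (sig c (fst p + snd p) = w ! snd p)"
definition win :: "nat \<Rightarrow> nat \<Rightarrow> (nat \<times> nat) set" where "win L i = {i} \<times> {..<L}"
definition ev :: "nat \<Rightarrow> bool list \<Rightarrow> nat \<Rightarrow> (nat \<Rightarrow> bool) set" where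
  "ev c w i = {\<omega>\<in>space Om. \<forall>p\<in>win (length w) i. \<omega> (fr c p) = gr c w p}"

lemma finite_win[simp]: "finite (win L i)" unfolding win_def by simp

lemma ev_sets[measurable]: "ev c w i \<in> sets Om"
  unfolding ev_def by (rule sets_Om_cyl) simp

lemma ev_inter: "ev c w i \<inter> ev c w j = {\<omega>\<in>space Om. \<forall>p\<in>win (length w) i \<union> win (length w) j. \<omega> (fr c p) = gr c w p}"
  unfolding ev_def by auto

lemma ev_inj: assumes "inj_on (fr c) (win (length w) i)"
  shows "measure Om (ev c w i) = (1/2) ^ length w"
proof -
  have "card (fr c ` win (length w) i) = card (win (length w) i)" using assms by (rule card_image)
  also have "\<dots> = length w" unfolding win_def by simp
  finally show ?thesis unfolding ev_def using spec_prob[of "win (length w) i" "fr c" "gr c w"] assms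
    by (auto dest: inj_onD)
qed

lemma ev_indep: assumes "fr c ` win (length w) i \<inter> fr c ` win (length w) j = {}"
  shows "measure Om (ev c w i \<inter> ev c w j) = measure Om (ev c w i) * measure Om (ev c w j)"
proof -
  let ?T = "win (length w) i" and ?U = "win (length w) j"
  let ?cons = "\<lambda>T. \<forall>t\<in>T. \<forall>t'\<in>T. fr c t = fr c t' \<longrightarrow> gr c w t = gr c w t'"
  have cons: "?cons (?T \<union> ?U) \<longleftrightarrow> ?cons ?T \<and> ?cons ?U" using assms by blast
  have card: "card (fr c ` (?T \<union> ?U)) = card (fr c ` ?T) + card (fr c ` ?U)"
    unfolding image_Un by (rule card_Un_disjoint) (use assms in auto)
  have ifmul: "\<And>a b (x::real) y. (if a \<and> b then x * y else 0) = (if a then x else 0) * (if b then y else 0)" by simp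
  have "measure Om (ev c w i \<inter> ev c w j) = (if ?cons (?T \<union> ?U) then (1/2)^card (fr c ` (?T \<union> ?U)) else 0)"
    unfolding ev_inter by (rule spec_prob) simp
  also have "\<dots> = (if ?cons ?T \<and> ?cons ?U then (1/2)^card (fr c ` ?T) * (1/2)^card (fr c ` ?U) else 0)"
    by (simp only: cons card power_add)
  also have "\<dots> = measure Om (ev c w i) * measure Om (ev c w j)"
    unfolding ifmul unfolding ev_def
    by (subst (1 2) spec_prob) simp_all
  finally show ?thesis .
qed

definition Sn :: "nat \<Rightarrow> bool list \<Rightarrow> nat \<Rightarrow> (nat \<Rightarrow> bool) \<Rightarrow> real" where
  "Sn c w N \<omega> = (\<Sum>i\<in>{1..N}. indicator (ev c w i) \<omega>)"

definition dep :: "nat \<Rightarrow> bool list \<Rightarrow> nat \<Rightarrow> (nat \<times> nat) set" where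
  "dep c w N = {(i,j). i \<in> {1..N} \<and> j \<in> {1..N} \<and> fr c ` win (length w) i \<inter> fr c ` win (length w) j \<noteq> {}}"

lemma int_ind: "A \<in> sets Om \<Longrightarrow> integrable Om (indicator A :: _ \<Rightarrow> real)"
  by (simp add: OP.emeasure_finite less_top[symmetric])

lemma Sn_measurable[measurable]: "Sn c w N \<in> borel_measurable Om"
  unfolding Sn_def by measurable

lemma Sn_sq: "(Sn c w N \<omega>)^2 = (\<Sum>i\<in>{1..N}. \<Sum>j\<in>{1..N}. indicator (ev c w i \<inter> ev c w j) \<omega>)"
  unfolding Sn_def power2_eq_square sum_product indicator_inter_arith ..

lemma Sn_int: "integrable Om (Sn c w N)"
  unfolding Sn_def by (intro Bochner_Integration.integrable_sum int_ind ev_sets)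

lemma Sn_sq_int: "integrable Om (\<lambda>\<omega>. (Sn c w N \<omega>)^2)"
  unfolding Sn_sq by (intro Bochner_Integration.integrable_sum int_ind sets.Int ev_sets)

lemma ev_sub: "ev c w i \<subseteq> space Om" unfolding ev_def by auto

lemma Sn_exp: "OP.expectation (Sn c w N) = (\<Sum>i\<in>{1..N}. measure Om (ev c w i))"
  unfolding Sn_def by (subst Bochner_Integration.integral_sum) (auto intro!: int_ind simp: Int_absorb2[OF ev_sub])

lemma Sn_sq_exp: "OP.expectation (\<lambda>\<omega>. (Sn c w N \<omega>)^2) = (\<Sum>i\<in>{1..N}. \<Sum>j\<in>{1..N}. measure Om (ev c w i \<inter> ev c w j))"
proof -
  have "OP.expectation (\<lambda>\<omega>. (Sn c w N \<omega>)^2) = (\<Sum>i\<in>{1..N}. OP.expectation (\<lambda>\<omega>. \<Sum>j\<in>{1..N}. indicator (ev c w i \<inter> ev c w j) \<omega>))"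
    unfolding Sn_sq by (rule Bochner_Integration.integral_sum) (intro Bochner_Integration.integrable_sum int_ind sets.Int ev_sets)
  also have "\<dots> = (\<Sum>i\<in>{1..N}. \<Sum>j\<in>{1..N}. OP.expectation (indicator (ev c w i \<inter> ev c w j)))"
    by (intro sum.cong refl Bochner_Integration.integral_sum int_ind sets.Int ev_sets)
  also have "\<dots> = (\<Sum>i\<in>{1..N}. \<Sum>j\<in>{1..N}. measure Om (ev c w i \<inter> ev c w j))"
    using ev_sub by (intro sum.cong refl) (simp add: Int_absorb2 le_infI1)
  finally show ?thesis .
qed

lemma var_bound: "OP.variance (Sn c w N) \<le> real (card (dep c w N))"
proof -
  let ?p = "\<lambda>i. measure Om (ev c w i)" and ?q = "\<lambda>i j. measure Om (ev c w i \<inter> ev c w j)"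
  have "OP.variance (Sn c w N) = (\<Sum>i\<in>{1..N}. \<Sum>j\<in>{1..N}. ?q i j) - (\<Sum>i\<in>{1..N}. ?p i)^2"
    using OP.variance_eq[OF Sn_int Sn_sq_int] Sn_exp Sn_sq_exp by simp
  also have "\<dots> = (\<Sum>i\<in>{1..N}. \<Sum>j\<in>{1..N}. ?q i j - ?p i * ?p j)"
    unfolding power2_eq_square sum_product sum_subtractf ..
  also have "\<dots> = (\<Sum>ij\<in>{1..N} \<times> {1..N}. ?q (fst ij) (snd ij) - ?p (fst ij) * ?p (snd ij))"
    by (subst sum.cartesian_product) (simp add: case_prod_beta)
  also have "\<dots> \<le> (\<Sum>ij\<in>{1..N} \<times> {1..N}. if ij \<in> dep c w N then 1 else 0)"
  proof (rule sum_mono)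
    fix ij assume ij: "ij \<in> {1..N} \<times> {1..N}"
    obtain i j where ijd: "ij = (i,j)" by force
    show "?q (fst ij) (snd ij) - ?p (fst ij) * ?p (snd ij) \<le> (if ij \<in> dep c w N then 1 else 0)"
    proof (cases "ij \<in> dep c w N")
      case True
      have "?q i j \<le> 1" by (rule OP.prob_le_1)
      moreover have "?p i * ?p j \<ge> 0" by simp
      ultimately have "?q i j - ?p i * ?p j \<le> 1" by linarith
      thus ?thesis using True ijd by simp
    next
      case False
      hence "fr c ` win (length w) i \<inter> fr c ` win (length w) j = {}" using ij ijd unfolding dep_def by auto
      hence "?q i j = ?p i * ?p j" by (rule ev_indep)
      thus ?thesis using False ijd by simp
    qed
  qed
  also have "\<dots> = real (card (dep c w N))"
  proof -
    have "dep c w N \<subseteq> {1..N} \<times> {1..N}" unfolding dep_def by auto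
    hence "(\<Sum>ij\<in>{1..N} \<times> {1..N}. if ij \<in> dep c w N then 1 else 0) = (\<Sum>ij\<in>dep c w N. (1::real))"
      by (subst sum.If_cases) (auto simp: Int_absorb1)
    thus ?thesis by simp
  qed
  finally show ?thesis .
qed

lemma cheb: assumes "a > 0"
  shows "OP.prob {\<omega>\<in>space Om. \<bar>Sn c w N \<omega> - OP.expectation (Sn c w N)\<bar> \<ge> a} \<le> real (card (dep c w N)) / a^2"
proof -
  have "OP.prob {\<omega>\<in>space Om. \<bar>Sn c w N \<omega> - OP.expectation (Sn c w N)\<bar> \<ge> a} \<le> OP.variance (Sn c w N) / a^2"
    by (rule OP.Chebyshev_inequality) (use assms Sn_sq_int in auto)
  also have "\<dots> \<le> real (card (dep c w N)) / a^2"
    using var_bound assms by (intro divide_right_mono) auto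
  finally show ?thesis .
qed


lemma fr_eq_rel: assumes "c > 0" "fr c (i,t) = fr c (j,t')" "i > 0" "j > 0"
  shows "rel c (i+t) (j+t')"
  using assms unfolding fr_def by (intro rho_eq_rel) auto

lemma card_dep: assumes c: "c > 0"
  shows "real (card (dep c w N)) \<le> real (length w)^2 * (2 * real (N + length w) * (sqrt (N + length w) + 1))"
proof -
  let ?L = "length w"
  let ?P = "{(x,y). x \<in> {1..N+?L} \<and> y \<in> {1..N+?L} \<and> rel c x y}"
  define Q where "Q t t' = {(i,j). i \<in> {1..N} \<and> j \<in> {1..N} \<and> rel c (i+t) (j+t')}" for t t'
  have sub: "dep c w N \<subseteq> (\<Union>t\<in>{..<?L}. \<Union>t'\<in>{..<?L}. Q t t')"
  proof
    fix ij assume "ij \<in> dep c w N"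
    then obtain i j where ij: "ij = (i,j)" "i \<in> {1..N}" "j \<in> {1..N}"
      and ne: "fr c ` win ?L i \<inter> fr c ` win ?L j \<noteq> {}" unfolding dep_def by auto
    then obtain t t' where tt: "t < ?L" "t' < ?L" "fr c (i,t) = fr c (j,t')" unfolding win_def by auto
    hence "rel c (i+t) (j+t')" using fr_eq_rel[OF c tt(3)] ij by auto
    thus "ij \<in> (\<Union>t\<in>{..<?L}. \<Union>t'\<in>{..<?L}. Q t t')" using ij tt unfolding Q_def by auto
  qed
  have fin: "finite (Q t t')" for t t' unfolding Q_def
    by (rule finite_subset[of _ "{1..N} \<times> {1..N}"]) auto
  have cQ: "card (Q t t') \<le> card ?P" if "t < ?L" "t' < ?L" for t t'
  proof -
    have "card (Q t t') = card ((\<lambda>(i,j). (i+t, j+t')) ` Q t t')"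
      by (rule card_image[symmetric]) (auto simp: inj_on_def)
    also have "\<dots> \<le> card ?P"
    proof (rule card_mono)
      show "finite ?P" by (rule finite_subset[of _ "{1..N+?L} \<times> {1..N+?L}"]) auto
      show "(\<lambda>(i,j). (i+t, j+t')) ` Q t t' \<subseteq> ?P"
      proof
        fix z assume "z \<in> (\<lambda>(i,j). (i+t, j+t')) ` Q t t'"
        then obtain i j where "z = (i+t, j+t')" "i \<in> {1..N}" "j \<in> {1..N}" "rel c (i+t) (j+t')"
          unfolding Q_def by auto
        thus "z \<in> ?P" using that by auto
      qed
    qed
    finally show ?thesis .
  qed
  have "card (dep c w N) \<le> card (\<Union>t\<in>{..<?L}. \<Union>t'\<in>{..<?L}. Q t t')"
    by (rule card_mono[OF _ sub]) (auto intro: fin)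
  also have "\<dots> \<le> (\<Sum>t\<in>{..<?L}. card (\<Union>t'\<in>{..<?L}. Q t t'))" by (rule card_UN_le) simp
  also have "\<dots> \<le> (\<Sum>t\<in>{..<?L}. \<Sum>t'\<in>{..<?L}. card (Q t t'))" by (intro sum_mono card_UN_le) simp
  also have "\<dots> \<le> (\<Sum>t\<in>{..<?L}. \<Sum>t'\<in>{..<?L}. card ?P)" by (intro sum_mono cQ) auto
  also have "\<dots> = ?L * ?L * card ?P" by simp
  finally have "real (card (dep c w N)) \<le> real (?L * ?L) * real (card ?P)"
    by (simp only: of_nat_mult[symmetric] of_nat_le_iff)
  also have "\<dots> \<le> real (?L * ?L) * (2 * real (N + ?L) * (sqrt (N + ?L) + 1))"
    using card_rel_pairs[OF c, of "N + ?L"] by (intro mult_left_mono) simp_all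
  finally show ?thesis by (simp add: power2_eq_square)
qed

definition badw :: "nat \<Rightarrow> nat \<Rightarrow> nat \<Rightarrow> nat set" where
  "badw c L N = {i \<in> {1..N}. \<not> inj_on (fr c) (win L i)}"

lemma card_badw: assumes c: "c > 0"
  shows "real (card (badw c L N)) \<le> real L * (real (L * c) * (sqrt (N + L) + 1))"
proof -
  let ?C = "{x \<in> {1..N+L}. \<exists>y. x < y \<and> y < x + L \<and> rel c x y}"
  define Q where "Q t = {i \<in> {1..N}. i + t \<in> ?C}" for t
  have sub: "badw c L N \<subseteq> (\<Union>t\<in>{..<L}. Q t)"
  proof
    fix i assume "i \<in> badw c L N"
    hence i: "i \<in> {1..N}" and ni: "\<not> inj_on (fr c) (win L i)" unfolding badw_def by auto
    then obtain p q where pq: "p \<in> win L i" "q \<in> win L i" "fr c p = fr c q" "p \<noteq> q"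
      unfolding inj_on_def by blast
    then obtain t t' where tt: "p = (i,t)" "q = (i,t')" "t < L" "t' < L" "t \<noteq> t'" unfolding win_def by auto
    show "i \<in> (\<Union>t\<in>{..<L}. Q t)"
    proof (cases "t < t'")
      case True
      have "rel c (i+t) (i+t')" using fr_eq_rel[OF c] pq(3) tt i by auto
      hence "i + t \<in> ?C" using True tt i by (intro CollectI conjI exI[of _ "i+t'"]) auto
      thus ?thesis using i tt unfolding Q_def by auto
    next
      case False
      hence lt: "t' < t" using tt by auto
      have "rel c (i+t) (i+t')" using fr_eq_rel[OF c] pq(3) tt i by auto
      hence "rel c (i+t') (i+t)" by (rule rel_sym)
      hence "i + t' \<in> ?C" using lt tt i by (intro CollectI conjI exI[of _ "i+t"]) auto
      thus ?thesis using i tt unfolding Q_def by auto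
    qed
  qed
  have cQ: "card (Q t) \<le> card ?C" if "t < L" for t
  proof -
    have "card (Q t) = card ((\<lambda>i. i + t) ` Q t)" by (rule card_image[symmetric]) (auto simp: inj_on_def)
    also have "\<dots> \<le> card ?C" by (rule card_mono) (auto simp: Q_def)
    finally show ?thesis .
  qed
  have "card (badw c L N) \<le> card (\<Union>t\<in>{..<L}. Q t)"
    by (rule card_mono[OF _ sub]) (auto simp: Q_def)
  also have "\<dots> \<le> (\<Sum>t\<in>{..<L}. card (Q t))" by (rule card_UN_le) simp
  also have "\<dots> \<le> (\<Sum>t\<in>{..<L}. card ?C)" by (intro sum_mono cQ) auto
  also have "\<dots> = L * card ?C" by simp
  finally have "real (card (badw c L N)) \<le> real L * real (card ?C)"
    by (simp only: of_nat_mult[symmetric] of_nat_le_iff)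
  also have "\<dots> \<le> real L * (real (L * c) * (sqrt (N + L) + 1))"
    by (intro mult_left_mono card_close_rel c) simp
  finally show ?thesis .
qed

lemma exp_close: assumes c: "c > 0"
  shows "\<bar>OP.expectation (Sn c w N) - real N * (1/2)^length w\<bar> \<le> real (card (badw c (length w) N))"
proof -
  let ?L = "length w"
  have "OP.expectation (Sn c w N) - real N * (1/2)^?L = (\<Sum>i\<in>{1..N}. measure Om (ev c w i) - (1/2)^?L)"
    unfolding Sn_exp by (simp add: sum_subtractf)
  also have "\<dots> = (\<Sum>i\<in>badw c ?L N. measure Om (ev c w i) - (1/2)^?L)"
  proof (rule sum.mono_neutral_right)
    show "\<forall>i\<in>{1..N} - badw c ?L N. measure Om (ev c w i) - (1/2)^?L = 0"
      using ev_inj unfolding badw_def by auto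
  qed (auto simp: badw_def)
  finally have "\<bar>OP.expectation (Sn c w N) - real N * (1/2)^?L\<bar> \<le> (\<Sum>i\<in>badw c ?L N. \<bar>measure Om (ev c w i) - (1/2)^?L\<bar>)"
    by (metis sum_abs)
  also have "\<dots> \<le> (\<Sum>i\<in>badw c ?L N. 1)"
  proof (rule sum_mono)
    fix i
    have "measure Om (ev c w i) \<le> 1" "measure Om (ev c w i) \<ge> 0" "(1/2::real)^?L \<le> 1" "(1/2::real)^?L \<ge> 0" by (auto simp: power_le_one)
    thus "\<bar>measure Om (ev c w i) - (1/2)^?L\<bar> \<le> 1" unfolding abs_le_iff by linarith
  qed
  finally show ?thesis by simp
qed

definition Aset :: "nat \<Rightarrow> (nat \<Rightarrow> bool) \<Rightarrow> nat set" where
  "Aset c \<omega> = {x. x \<ge> 1 \<and> \<omega> (rho c x) = sig c x}"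

lemma Sn_count: "Sn c w N \<omega> = real (card {i \<in> {1..N}. \<forall>j < length w. (i + j \<in> Aset c \<omega>) = w ! j})"
proof -
  have "Sn c w N \<omega> = real (card {i \<in> {1..N}. \<omega> \<in> ev c w i})"
    unfolding Sn_def indicator_def by (simp add: sum.If_cases Int_def)
  also have "{i \<in> {1..N}. \<omega> \<in> ev c w i} = {i \<in> {1..N}. \<forall>j < length w. (i + j \<in> Aset c \<omega>) = w ! j}"
    unfolding ev_def win_def Aset_def fr_def gr_def space_Om by auto
  finally show ?thesis .
qed


definition r4 :: "nat \<Rightarrow> nat" where "r4 N = Max {m. m^4 \<le> N}"

lemma r4_fin: "finite {m::nat. m^4 \<le> N}"
proof (rule finite_subset[of _ "{..N}"])
  show "{m::nat. m^4 \<le> N} \<subseteq> {..N}"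
  proof
    fix m :: nat assume "m \<in> {m. m^4 \<le> N}"
    moreover have "m \<le> m^4" using self_le_power[of m 4] by (cases "m = 0") auto
    ultimately show "m \<in> {..N}" by auto
  qed
qed simp

lemma r4_le: "(r4 N)^4 \<le> N"
  using Max_in[OF r4_fin, of N] unfolding r4_def by (metis empty_iff mem_Collect_eq zero_le zero_power[of 4] zero_less_numeral)

lemma r4_gt: "N < (r4 N + 1)^4"
proof (rule ccontr)
  assume "\<not> N < (r4 N + 1)^4"
  hence "r4 N + 1 \<in> {m. m^4 \<le> N}" by simp
  hence "r4 N + 1 \<le> r4 N" unfolding r4_def using Max_ge[OF r4_fin] by blast
  thus False by simp
qed

lemma r4_ge: "Z^4 \<le> N \<Longrightarrow> Z \<le> r4 N"
  unfolding r4_def using Max_ge[OF r4_fin] by blast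

lemma r4_filterlim: "filterlim r4 at_top sequentially"
  unfolding filterlim_at_top eventually_sequentially using r4_ge by blast

lemma r4_pos: "N \<ge> 1 \<Longrightarrow> r4 N \<ge> 1"
  using r4_ge[of 1 N] by simp

lemma interp:
  fixes S :: "nat \<Rightarrow> real"
  assumes mono: "\<And>a b. a \<le> b \<Longrightarrow> S a \<le> S b" and nn: "\<And>a. S a \<ge> 0"
    and lim: "(\<lambda>k. S ((k+1)^4) / real ((k+1)^4)) \<longlonglongrightarrow> \<mu>"
  shows "(\<lambda>N. S N / real N) \<longlonglongrightarrow> \<mu>"
proof -
  define g where "g m = S (m^4) / real (m^4)" for m
  have g: "g \<longlonglongrightarrow> \<mu>"
    using lim unfolding g_def by (subst filterlim_sequentially_Suc[symmetric]) simp
  define h1 where "h1 m = g m * (real m ^ 4 / (real m + 1)^4)" for m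
  define h2 where "h2 m = g (m+1) * ((real m + 1)^4 / real m ^ 4)" for m
  have a1: "(\<lambda>m::nat. real m ^ 4 / (real m + 1)^4) \<longlonglongrightarrow> 1" by real_asymp
  have a2: "(\<lambda>m::nat. (real m + 1)^4 / real m ^ 4) \<longlonglongrightarrow> 1" by real_asymp
  have g1: "(\<lambda>m. g (m+1)) \<longlonglongrightarrow> \<mu>" using g by (rule LIMSEQ_ignore_initial_segment)
  have h1: "h1 \<longlonglongrightarrow> \<mu>" unfolding h1_def using tendsto_mult[OF g a1] by simp
  have h2: "h2 \<longlonglongrightarrow> \<mu>" unfolding h2_def using tendsto_mult[OF g1 a2] by simp
  have l1: "(\<lambda>N. h1 (r4 N)) \<longlonglongrightarrow> \<mu>" by (rule filterlim_compose[OF h1 r4_filterlim])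
  have l2: "(\<lambda>N. h2 (r4 N)) \<longlonglongrightarrow> \<mu>" by (rule filterlim_compose[OF h2 r4_filterlim])
  show ?thesis
  proof (rule tendsto_sandwich[OF _ _ l1 l2])
    show "\<forall>\<^sub>F N in sequentially. h1 (r4 N) \<le> S N / real N"
      unfolding eventually_sequentially
    proof (intro exI allI impI)
      fix N :: nat assume N: "N \<ge> 1"
      define m where "m = r4 N"
      have m1: "m \<ge> 1" using r4_pos[OF N] unfolding m_def .
      have le: "m^4 \<le> N" and gt: "N < (m+1)^4" using r4_le r4_gt unfolding m_def by auto
      have "h1 m = S (m^4) / (real m + 1)^4" unfolding h1_def g_def using m1 by (simp add: field_simps)
      also have "\<dots> \<le> S N / (real m + 1)^4" using mono[OF le] by (intro divide_right_mono) auto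
      also have "\<dots> \<le> S N / real N"
      proof (rule divide_left_mono)
        have "real N \<le> real ((m+1)^4)" using gt by linarith
        thus "real N \<le> (real m + 1)^4" by (simp add: add.commute)
      qed (use nn N in auto)
      finally show "h1 (r4 N) \<le> S N / real N" unfolding m_def .
    qed
    show "\<forall>\<^sub>F N in sequentially. S N / real N \<le> h2 (r4 N)"
      unfolding eventually_sequentially
    proof (intro exI allI impI)
      fix N :: nat assume N: "N \<ge> 1"
      define m where "m = r4 N"
      have m1: "m \<ge> 1" using r4_pos[OF N] unfolding m_def .
      have le: "m^4 \<le> N" and gt: "N < (m+1)^4" using r4_le r4_gt unfolding m_def by auto
      have "S N / real N \<le> S N / real m ^ 4"
      proof (rule divide_left_mono)
        have "real (m^4) \<le> real N" using le by linarith
        thus "real m ^ 4 \<le> real N" by simp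
      qed (use nn m1 N in auto)
      also have "\<dots> \<le> S ((m+1)^4) / real m ^ 4" using mono[of N "(m+1)^4"] gt by (intro divide_right_mono) auto
      also have "\<dots> = h2 m" unfolding h2_def g_def using m1 by (simp add: field_simps)
      finally show "S N / real N \<le> h2 (r4 N)" unfolding m_def .
    qed
  qed
qed


definition Bk :: "nat \<Rightarrow> bool list \<Rightarrow> nat \<Rightarrow> nat \<Rightarrow> (nat \<Rightarrow> bool) set" where
  "Bk c w r k = {\<omega>\<in>space Om. \<bar>Sn c w ((k+1)^4) \<omega> - OP.expectation (Sn c w ((k+1)^4))\<bar> \<ge> real ((k+1)^4) / real (r+1)}"

lemma Bk_sets[measurable]: "Bk c w r k \<in> sets Om"
  unfolding Bk_def by measurable

lemma Bk_prob: assumes c: "c > 0"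
  shows "measure Om (Bk c w r k) \<le> (2 * real (length w)^2 * (1 + real (length w)) * (2 + real (length w)) * (real r + 1)^2) / (real k + 1)^2"
proof -
  define L where "L = real (length w)"
  define K where "K = real k + 1"
  have K1: "K \<ge> 1" unfolding K_def by simp
  define N where "N = K^4"
  have N1: "N \<ge> 1" unfolding N_def using K1 by simp
  have Nk: "real ((k+1)^4) = N" unfolding N_def K_def by (simp add: add.commute)
  have L0: "L \<ge> 0" unfolding L_def by simp
  have a0: "N / real (r+1) > 0" using N1 by simp
  have "measure Om (Bk c w r k) \<le> real (card (dep c w ((k+1)^4))) / (N / real (r+1))^2"
    unfolding Bk_def using cheb[OF a0, of c w "(k+1)^4"] Nk by simp
  also have "real (card (dep c w ((k+1)^4))) \<le> L^2 * (2 * (N + L) * (sqrt (N + L) + 1))"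
    using card_dep[OF c, of w "(k+1)^4"] Nk unfolding L_def by simp
  also have "\<dots> \<le> L^2 * (2 * ((1 + L) * K^4) * ((2 + L) * K^2))"
  proof (intro mult_left_mono mult_mono)
    have "L * 1 \<le> L * K^4" using N1 L0 unfolding N_def by (intro mult_left_mono) auto
    thus NL: "N + L \<le> (1 + L) * K^4" unfolding N_def by (simp add: algebra_simps)
    have "sqrt (N + L) \<le> sqrt ((1 + L) * K^4)" using NL by (rule real_sqrt_le_mono)
    also have "\<dots> = sqrt (1 + L) * K^2"
    proof -
      have "K^4 = (K^2)^2" by simp
      hence "sqrt ((1 + L) * K^4) = sqrt (1 + L) * sqrt ((K^2)^2)" by (simp only: real_sqrt_mult)
      also have "sqrt ((K^2)^2) = K^2" by (simp only: real_sqrt_abs) simp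
      finally show ?thesis .
    qed
    also have "\<dots> \<le> (1 + L) * K^2"
    proof (rule mult_right_mono)
      have "1 + L \<le> (1 + L)^2" using L0 by (simp add: power2_eq_square)
      hence "sqrt (1 + L) \<le> sqrt ((1 + L)^2)" by (rule real_sqrt_le_mono)
      also have "\<dots> = 1 + L" using L0 by simp
      finally show "sqrt (1 + L) \<le> 1 + L" .
    qed simp
    finally have "sqrt (N + L) \<le> (1 + L) * K^2" .
    moreover have "1 \<le> K^2" using K1 by simp
    ultimately show "sqrt (N + L) + 1 \<le> (2 + L) * K^2" by (simp add: algebra_simps)
  qed (use L0 K1 N1 in auto)
  finally have "measure Om (Bk c w r k) \<le> L^2 * (2 * ((1 + L) * K^4) * ((2 + L) * K^2)) / (N / real (r+1))^2"
    using a0 by (simp add: divide_right_mono)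
  also have "\<dots> = (2 * L^2 * (1 + L) * (2 + L) * (real r + 1)^2) / K^2"
    unfolding N_def using K1 by (simp add: field_simps power2_eq_square power4_eq_xxxx)
  finally show ?thesis unfolding L_def K_def .
qed

lemma Bk_summable: assumes c: "c > 0"
  shows "summable (\<lambda>k. measure Om (Bk c w r k))"
proof (rule summable_comparison_test)
  let ?C = "2 * real (length w)^2 * (1 + real (length w)) * (2 + real (length w)) * (real r + 1)^2"
  show "\<exists>N. \<forall>n\<ge>N. norm (measure Om (Bk c w r n)) \<le> ?C / (real n + 1)^2"
    using Bk_prob[OF c] by auto
  have "summable (\<lambda>n. inverse (real (Suc n) ^ 2))"
    using inverse_power_summable[of 2, where 'a=real] by (subst summable_Suc_iff) simp
  hence "summable (\<lambda>n. ?C * inverse (real (Suc n) ^ 2))" by (rule summable_mult)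
  thus "summable (\<lambda>n. ?C / (real n + 1)^2)" by (simp add: divide_inverse add.commute)
qed

lemma AE_good: assumes c: "c > 0"
  shows "AE \<omega> in Om. \<forall>w::bool list. \<forall>r::nat. eventually (\<lambda>k. \<omega> \<in> space Om - Bk c w r k) sequentially"
proof -
  have "AE \<omega> in Om. eventually (\<lambda>k. \<omega> \<in> space Om - Bk c w r k) sequentially" for w r
    by (rule borel_cantelli_AE1) (auto simp: Bk_summable[OF c] OP.emeasure_finite less_top[symmetric])
  thus ?thesis by (simp add: AE_all_countable)
qed


lemma sqrt_over: "(\<lambda>N::nat. (sqrt (real N + L) + 1) / real N) \<longlonglongrightarrow> 0"
  by real_asymp

lemma exp_lim: assumes c: "c > 0"
  shows "(\<lambda>N. OP.expectation (Sn c w N) / real N) \<longlonglongrightarrow> (1/2)^length w"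
proof -
  let ?L = "length w"
  define C0 where "C0 = real ?L * real (?L * c)"
  have "(\<lambda>N. OP.expectation (Sn c w N) / real N - (1/2)^?L) \<longlonglongrightarrow> 0"
  proof (rule Lim_null_comparison)
    show "(\<lambda>N. C0 * ((sqrt (real N + real ?L) + 1) / real N)) \<longlonglongrightarrow> 0"
      using tendsto_mult_right_zero[OF sqrt_over] by blast
    show "\<forall>\<^sub>F N in sequentially. norm (OP.expectation (Sn c w N) / real N - (1/2)^?L) \<le> C0 * ((sqrt (real N + real ?L) + 1) / real N)"
      unfolding eventually_sequentially
    proof (intro exI allI impI)
      fix N :: nat assume N: "N \<ge> 1"
      have "OP.expectation (Sn c w N) / real N - (1/2)^?L = (OP.expectation (Sn c w N) - real N * (1/2)^?L) / real N"
        using N by (simp add: field_simps)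
      hence "norm (OP.expectation (Sn c w N) / real N - (1/2)^?L) = \<bar>OP.expectation (Sn c w N) - real N * (1/2)^?L\<bar> / real N"
        by simp
      also have "\<dots> \<le> real (card (badw c ?L N)) / real N"
        using exp_close[OF c, of w N] by (intro divide_right_mono) auto
      also have "\<dots> \<le> (real ?L * (real (?L * c) * (sqrt (real (N + ?L)) + 1))) / real N"
        using card_badw[OF c, of ?L N] by (intro divide_right_mono) auto
      also have "\<dots> = C0 * ((sqrt (real N + real ?L) + 1) / real N)" unfolding C0_def by simp
      finally show "norm (OP.expectation (Sn c w N) / real N - (1/2)^?L) \<le> C0 * ((sqrt (real N + real ?L) + 1) / real N)" .
    qed
  qed
  thus ?thesis by (simp add: LIM_zero_iff)
qed

lemma det_normal:
  assumes c: "c > 0" and good: "\<forall>r::nat. eventually (\<lambda>k. \<omega> \<in> space Om - Bk c w r k) sequentially"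
  shows "(\<lambda>N. real (card {i\<in>{1..N}. \<forall>j<length w. (i+j \<in> Aset c \<omega>) = w!j}) / real N) \<longlonglongrightarrow> (1/2)^length w"
proof -
  let ?S = "\<lambda>N. Sn c w N \<omega>" and ?E = "\<lambda>N. OP.expectation (Sn c w N)"
  let ?Nk = "\<lambda>k::nat. (k+1)^4"
  have D: "(\<lambda>k. (?S (?Nk k) - ?E (?Nk k)) / real (?Nk k)) \<longlonglongrightarrow> 0"
  proof (rule tendstoI)
    fix \<epsilon> :: real assume e: "\<epsilon> > 0"
    obtain n :: nat where n: "n > 0" "inverse (real n) < \<epsilon>" using ex_inverse_of_nat_less[OF e] by auto
    define r where "r = n - 1"
    have rn: "real (r+1) = real n" unfolding r_def using n by simp
    show "\<forall>\<^sub>F k in sequentially. dist ((?S (?Nk k) - ?E (?Nk k)) / real (?Nk k)) 0 < \<epsilon>"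
      using good[rule_format, of r]
    proof (rule eventually_mono)
      fix k assume "\<omega> \<in> space Om - Bk c w r k"
      hence lt: "\<bar>?S (?Nk k) - ?E (?Nk k)\<bar> < real (?Nk k) / real (r+1)" unfolding Bk_def space_Om by auto
      have pos: "real (?Nk k) > 0" by simp
      have "dist ((?S (?Nk k) - ?E (?Nk k)) / real (?Nk k)) 0 = \<bar>?S (?Nk k) - ?E (?Nk k)\<bar> / real (?Nk k)"
        by (simp add: dist_real_def)
      also have "\<dots> < (real (?Nk k) / real (r+1)) / real (?Nk k)"
        using lt pos by (intro divide_strict_right_mono) auto
      also have "\<dots> = inverse (real n)" using pos rn by (simp add: field_simps)
      finally show "dist ((?S (?Nk k) - ?E (?Nk k)) / real (?Nk k)) 0 < \<epsilon>" using n by linarith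
    qed
  qed
  have sm: "strict_mono ?Nk"
    by (rule strict_monoI) (simp add: power_strict_mono)
  have E: "(\<lambda>k. ?E (?Nk k) / real (?Nk k)) \<longlonglongrightarrow> (1/2)^length w"
    using LIMSEQ_subseq_LIMSEQ[OF exp_lim[OF c, of w] sm] by (simp add: o_def)
  have "(\<lambda>k. (?S (?Nk k) - ?E (?Nk k)) / real (?Nk k) + ?E (?Nk k) / real (?Nk k)) \<longlonglongrightarrow> 0 + (1/2)^length w"
    by (rule tendsto_add[OF D E])
  hence SK: "(\<lambda>k. ?S (?Nk k) / real (?Nk k)) \<longlonglongrightarrow> (1/2)^length w"
    by (simp add: diff_divide_distrib)
  have "(\<lambda>N. ?S N / real N) \<longlonglongrightarrow> (1/2)^length w"
  proof (rule interp[OF _ _ SK])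
    fix a b :: nat assume "a \<le> b"
    thus "?S a \<le> ?S b" unfolding Sn_count by (intro of_nat_mono card_mono) auto
  qed (simp add: Sn_count)
  thus ?thesis unfolding Sn_count .
qed

lemma key_rho:
  assumes c: "c > 0" and k: "even k"
    and x: "x > 0" and y: "y > 0" and eq: "x * y = c * n^k"
  shows "rho c x = rho c y"
proof -
  obtain h where h: "k = 2*h" using k by auto
  have "x*y*c = (c * n^h)^2" using eq h by (simp add: power_mult_distrib power_mult algebra_simps power2_eq_square)
  hence sq: "issq (x*y*c)" unfolding issq_def by blast
  hence r: "rel c x y" using x y unfolding rel_def by auto
  thus ?thesis using rho_eq[OF c r] by simp
qed

theorem mainTheorem4:
  fixes c k :: nat
  assumes "c > 0" "k > 0"
    and "\<not> (\<exists>m::nat. c = m ^ 2)"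
    and "even k"
  shows "\<exists>A :: nat set. A \<subseteq> {1..} \<and> normal_set A \<and>
           (\<forall>x\<in>A. \<forall>y\<in>A. \<forall>n::nat. n \<ge> 1 \<longrightarrow> x * y \<noteq> c * n ^ k)"
proof -
  have c: "c > 0" by fact
  have nsq: "\<not> issq c" using assms(3) unfolding issq_def by auto
  obtain \<omega> where good: "\<forall>w::bool list. \<forall>r::nat. eventually (\<lambda>k. \<omega> \<in> space Om - Bk c w r k) sequentially"
  proof -
    have ae: "AE \<omega> in Om. \<forall>w::bool list. \<forall>r::nat. eventually (\<lambda>k. \<omega> \<in> space Om - Bk c w r k) sequentially"
      by (rule AE_good[OF c])
    show ?thesis
    proof (rule ccontr)
      assume "\<not> thesis"
      hence "\<forall>\<omega>. \<not> (\<forall>w::bool list. \<forall>r::nat. eventually (\<lambda>k. \<omega> \<in> space Om - Bk c w r k) sequentially)"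
        using that by blast
      hence "AE \<omega> in Om. False" using AE_mp[OF ae AE_I2] by blast
      thus False by simp
    qed
  qed
  define A where "A = Aset c \<omega>"
  have "A \<subseteq> {1..}" unfolding A_def Aset_def by auto
  moreover have "normal_set A"
    unfolding normal_set_def normal_seq_def
  proof
    fix w :: "bool list"
    show "(\<lambda>N. real (card {i \<in> {1..N}. \<forall>j<length w. (i + j \<in> A) = w ! j}) / real N) \<longlonglongrightarrow> (1/2) ^ length w"
      unfolding A_def using det_normal[OF c] good by blast
  qed
  moreover have "\<forall>x\<in>A. \<forall>y\<in>A. \<forall>n::nat. n \<ge> 1 \<longrightarrow> x * y \<noteq> c * n ^ k"
  proof (intro ballI allI impI notI)
    fix x y n assume xA: "x \<in> A" and yA: "y \<in> A" and "n \<ge> 1" and eq: "x * y = c * n^k"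
    have x: "x > 0" and y: "y > 0" using xA yA unfolding A_def Aset_def by auto
    have "\<omega> (rho c x) = sig c x" "\<omega> (rho c y) = sig c y" using xA yA unfolding A_def Aset_def by auto
    moreover have "rho c x = rho c y" using key_rho[OF c assms(4) x y eq] .
    ultimately have "sig c x = sig c y" by simp
    thus False using key_avoid[OF c nsq assms(4) x y eq] by simp
  qed
  ultimately show ?thesis by blast
qed

end
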